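(* Let $\mathsf{K}$ be an idempotent commutative semiring. Every rational series $\mathsf{S}\in\mathsf{K}[[X]]$ can be written as $$\mathsf{S}=\bigoplus_{1\leq i\leq r}\mathsf{P}_i\,(\mathsf{q}_iX^c)^*,$$ where $r\ge 0$, $\mathsf{P}_1,\dots,\mathsf{P}_r\in\mathsf{K}[X]$ are polynomials, $\mathsf{q}_1,\dots,\mathsf{q}_r\in\mathsf{K}$, and $c$ is a positive integer.
   Context: $\mathsf{K}[[X]]$ is the semiring of formal power series over $\mathsf{K}$ with coefficientwise sum $\oplus$ and Cauchy product; for a series $U$ with zero constant coefficient, $U^*=\bigoplus_{k\ge0}U^k$. A series is rational if it belongs to the smallest subset of $\mathsf{K}[[X]]$ containing $\mathsf{K}[X]$ and closed under sum, product and star (of series with zero constant coefficient). Idempotent: $u\oplus u=u$; commutative: $uv=vu$. *)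

theory Defs
  imports "HOL-Computational_Algebra.Polynomial_FPS"
begin

text \<open>Star of a formal power series: U^* = sum over k of U^k. For U with zero
constant coefficient, U^k has no coefficients below degree k, so the n-th
coefficient of the infinite sum is the finite sum over k = 0..n.\<close>
definition fps_star :: "'a::comm_semiring_1 fps \<Rightarrow> 'a fps" where
  "fps_star U = Abs_fps (\<lambda>n. \<Sum>k\<le>n. fps_nth (U ^ k) n)"

inductive_set rational_fps :: "'a::comm_semiring_1 fps set" where
  poly: "fps_of_poly p \<in> rational_fps"
| add: "S \<in> rational_fps \<Longrightarrow> T \<in> rational_fps \<Longrightarrow> S + T \<in> rational_fps"
| mult: "S \<in> rational_fps \<Longrightarrow> T \<in> rational_fps \<Longrightarrow> S * T \<in> rational_fps"
| star: "U \<in> rational_fps \<Longrightarrow> fps_nth U 0 = 0 \<Longrightarrow> fps_star U \<in> rational_fps"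

end

theory Submission
  imports Defs
begin

unbundle fps_syntax

lemma star_nth: "fps_star U $ n = (\<Sum>k\<le>n. (U ^ k) $ n)"
  by (simp add: fps_star_def)

lemma power_nth_zero:
  fixes U :: "'a::comm_semiring_1 fps"
  assumes "U $ 0 = 0"
  shows "n < k \<Longrightarrow> (U ^ k) $ n = 0"
proof (induction k arbitrary: n)
  case 0 then show ?case by simp
next
  case (Suc k)
  have "(U ^ Suc k) $ n = (\<Sum>i=0..n. U $ i * (U ^ k) $ (n - i))"
    by (simp add: fps_mult_nth)
  also have "\<dots> = 0"
  proof (rule sum.neutral, intro ballI)
    fix i assume "i \<in> {0..n}"
    show "U $ i * (U ^ k) $ (n - i) = 0"
    proof (cases "i = 0")
      case True then show ?thesis using assms by simp
    next
      case False then have "n - i < k" using Suc.prems \<open>i \<in> {0..n}\<close> by auto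
      then show ?thesis using Suc.IH by simp
    qed
  qed
  finally show ?case .
qed

lemma mult_nth_cong:
  fixes C A B :: "'a::comm_semiring_1 fps"
  assumes "\<And>m. m \<le> n \<Longrightarrow> A $ m = B $ m"
  shows "(C * A) $ n = (C * B) $ n"
  unfolding fps_mult_nth using assms by (intro sum.cong) auto

lemma mult_nth_cong':
  fixes C A B :: "'a::comm_semiring_1 fps"
  assumes "C $ 0 = 0" "\<And>m. m < n \<Longrightarrow> A $ m = B $ m"
  shows "(C * A) $ n = (C * B) $ n"
  unfolding fps_mult_nth
proof (intro sum.cong refl)
  fix i assume "i \<in> {0..n}"
  then show "C $ i * A $ (n - i) = C $ i * B $ (n - i)"
    using assms by (cases "i = 0") auto
qed

lemma star_trunc:
  fixes U :: "'a::comm_semiring_1 fps"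
  assumes "U $ 0 = 0" "n < N"
  shows "fps_star U $ n = (\<Sum>k<N. U ^ k) $ n"
proof -
  have "(\<Sum>k<N. U ^ k) $ n = (\<Sum>k<N. (U ^ k) $ n)" by (simp add: fps_sum_nth)
  also have "\<dots> = (\<Sum>k\<le>n. (U ^ k) $ n)"
  proof (rule sum.mono_neutral_right)
    show "\<forall>i\<in>{..<N} - {..n}. (U ^ i) $ n = 0"
      using power_nth_zero[OF assms(1)] by auto
  qed (use assms in auto)
  finally show ?thesis by (simp add: star_nth)
qed

lemma geom_step:
  fixes U :: "'a::comm_semiring_1 fps"
  shows "(\<Sum>k<Suc N. U ^ k) = 1 + U * (\<Sum>k<N. U ^ k)"
  by (subst sum.lessThan_Suc_shift) (simp add: sum_distrib_left)

lemma star_eq: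
  fixes U :: "'a::comm_semiring_1 fps"
  assumes "U $ 0 = 0"
  shows "fps_star U = 1 + U * fps_star U"
proof (rule fps_ext)
  fix n
  have "fps_star U $ n = (\<Sum>k<Suc (Suc n). U ^ k) $ n"
    using star_trunc[OF assms, of n "Suc (Suc n)"] by simp
  also have "\<dots> = (1 + U * (\<Sum>k<Suc n. U ^ k)) $ n" by (subst geom_step) (rule refl)
  also have "(U * (\<Sum>k<Suc n. U ^ k)) $ n = (U * fps_star U) $ n"
    by (rule mult_nth_cong, rule star_trunc[OF assms, symmetric]) simp
  then have "(1 + U * (\<Sum>k<Suc n. U ^ k)) $ n = (1 + U * fps_star U) $ n" by simp
  finally show "fps_star U $ n = (1 + U * fps_star U) $ n" by simp
qed

lemma star_unique:
  fixes U V :: "'a::comm_semiring_1 fps"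
  assumes "U $ 0 = 0" "V = 1 + U * V"
  shows "V = fps_star U"
proof -
  have "V $ n = fps_star U $ n" for n
  proof (induction n rule: less_induct)
    case (less n)
    have "V $ n = (1 + U * V) $ n" using assms(2) by simp
    also have "\<dots> = (1 + U * fps_star U) $ n"
      using mult_nth_cong'[OF assms(1), of n V "fps_star U"] less by simp
    also have "\<dots> = fps_star U $ n" using star_eq[OF assms(1)] by simp
    finally show ?case .
  qed
  then show ?thesis by (simp add: fps_ext)
qed

lemma star_nth0 [simp]: "fps_star U $ 0 = 1"
  by (simp add: star_nth)

lemma star_zero [simp]: "fps_star (0::'a::comm_semiring_1 fps) = 1"
  by (rule star_unique[symmetric]) simp_all



definition trm :: "nat \<Rightarrow> 'a::comm_semiring_1 poly \<Rightarrow> 'a \<Rightarrow> 'a fps" where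
  "trm c p q = fps_of_poly p * fps_star (fps_const q * fps_X ^ c)"

definition good :: "nat \<Rightarrow> 'a::comm_semiring_1 fps \<Rightarrow> bool" where
  "good c S \<longleftrightarrow> (\<exists>xs. S = sum_list (map (\<lambda>(p,q). trm c p q) xs))"

definition goodA :: "'a::comm_semiring_1 fps \<Rightarrow> bool" where
  "goodA S \<longleftrightarrow> (\<exists>c>0. good c S)"

lemma Z0: "0 < c \<Longrightarrow> (fps_const (q::'a::comm_semiring_1) * fps_X ^ c) $ 0 = 0"
  by simp

lemma trm0: "0 < c \<Longrightarrow> trm c p q $ 0 = coeff p 0"
  by (simp add: trm_def)

lemma good_0: "good c 0"
  unfolding good_def by (rule exI[of _ "[]"]) simp

lemma good_add: "good c S \<Longrightarrow> good c T \<Longrightarrow> good c (S + T)"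
  unfolding good_def by (metis map_append sum_list_append)

lemma good_trm: "good c (trm c p q)"
  unfolding good_def by (rule exI[of _ "[(p,q)]"]) simp

lemma fps_of_poly_monom_sr:
  "fps_of_poly (monom (a::'a::comm_semiring_1) n) = fps_const a * fps_X ^ n"
  by (rule fps_ext) (simp add: coeff_monom)

lemma lift_identity:
  fixes Z :: "'a::comm_semiring_1 fps"
  assumes Z0: "Z $ 0 = 0" and d: "0 < d"
  shows "fps_star Z = (\<Sum>j<d. Z ^ j) * fps_star (Z ^ d)"
proof (rule star_unique[symmetric])
  show "Z $ 0 = 0" by fact
  obtain e where e: "d = Suc e" using d by (cases d) auto
  have Zd0: "(Z ^ d) $ 0 = 0" using Z0 d by (simp add: fps_mult_nth_0 power_0_left e)
  define S where "S = fps_star (Z ^ d)"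
  have eS: "S = 1 + Z ^ d * S" using star_eq[OF Zd0] unfolding S_def .
  define A where "A = (\<Sum>j<e. Z ^ Suc j)"
  have R1: "(\<Sum>j<d. Z ^ j) = 1 + A" unfolding A_def e
    by (subst sum.lessThan_Suc_shift) simp
  have R2: "Z * (\<Sum>j<d. Z ^ j) = A + Z ^ d" unfolding A_def e
    by (simp add: sum_distrib_left distrib_left)
  have "1 + Z * ((\<Sum>j<d. Z ^ j) * S) = 1 + (A + Z ^ d) * S"
    by (simp only: mult.assoc[symmetric] R2)
  also have "\<dots> = (1 + Z ^ d * S) + A * S" by (simp add: algebra_simps)
  also have "\<dots> = S + A * S" using eS by simp
  also have "\<dots> = (\<Sum>j<d. Z ^ j) * S" using R1 by (simp add: algebra_simps)
  finally show "(\<Sum>j<d. Z ^ j) * S = 1 + Z * ((\<Sum>j<d. Z ^ j) * S)" by simp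
qed

lemma trm_lift:
  assumes c: "0 < c" and d: "0 < d"
  shows "\<exists>p' q'. trm c p (q::'a::comm_semiring_1) = trm (c * d) p' q'"
proof -
  define Z where "Z = fps_const q * fps_X ^ c"
  define R where "R = (\<Sum>j<d. monom (q ^ j) (c * j))"
  have ZP: "Z ^ j = fps_const (q ^ j) * fps_X ^ (c * j)" for j
    unfolding Z_def by (simp add: power_mult_distrib power_mult)
  have "fps_of_poly R = (\<Sum>j<d. Z ^ j)"
    unfolding R_def by (simp add: fps_of_poly_sum fps_of_poly_monom_sr ZP)
  moreover have "fps_star Z = (\<Sum>j<d. Z ^ j) * fps_star (Z ^ d)"
    by (rule lift_identity) (use c d in \<open>simp_all add: Z_def\<close>)
  ultimately have "trm c p q = trm (c * d) (p * R) (q ^ d)"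
    unfolding trm_def by (simp add: fps_of_poly_mult ZP[of d] Z_def[symmetric] mult.assoc mult.commute[of d c])
  then show ?thesis by blast
qed

lemma good_lift:
  assumes "good c S" "0 < c" "0 < d"
  shows "good (c * d) S"
proof -
  obtain xs where xs: "S = sum_list (map (\<lambda>(p,q). trm c p q) xs)"
    using assms(1) unfolding good_def by blast
  have "good (c * d) (sum_list (map (\<lambda>(p,q). trm c p q) xs))"
  proof (induction xs)
    case Nil then show ?case by (simp add: good_0)
  next
    case (Cons a xs)
    obtain p q where a: "a = (p, q)" by (cases a)
    obtain p' q' where "trm c p q = trm (c * d) p' q'" using trm_lift[OF assms(2,3)] by blast
    then show ?case using Cons a by (simp add: good_add good_trm)
  qed
  then show ?thesis using xs by simp
qed

lemma goodA_add: "goodA S \<Longrightarrow> goodA T \<Longrightarrow> goodA (S + T)"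
  unfolding goodA_def
  by (metis good_add good_lift mult.commute nat_0_less_mult_iff)

lemma goodA_poly: "goodA (fps_of_poly p)"
proof -
  have "fps_of_poly p = trm 1 p 0" by (simp add: trm_def)
  then show ?thesis unfolding goodA_def using good_trm[of 1 p 0] by auto
qed

lemma goodA_1: "goodA 1"
  using goodA_poly[of 1] by simp

lemma goodA_starZ: "0 < c \<Longrightarrow> goodA (fps_star (fps_const q * fps_X ^ c))"
  unfolding goodA_def using good_trm[of c 1 q] by (auto simp: trm_def)

context
  fixes dummy :: "'a::comm_semiring_1 itself"
  assumes idem: "\<And>u::'a. u + u = u"
begin

lemma fps_idem: "(U::'a fps) + U = U"
  by (rule fps_ext) (simp add: idem)

lemma zsf: "(a::'a) + b = 0 \<Longrightarrow> a = 0"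
  by (metis add.assoc add_0_right idem)

lemma star_add:
  fixes U V :: "'a fps"
  assumes U0: "U $ 0 = 0" and V0: "V $ 0 = 0"
  shows "fps_star U * fps_star V = fps_star (U + V)"
proof (rule star_unique)
  show "(U + V) $ 0 = 0" using U0 V0 by simp
  define A where "A = fps_star U"
  define B where "B = fps_star V"
  have eA: "1 + U * A = A" using star_eq[OF U0] unfolding A_def by simp
  have eB: "1 + V * B = B" using star_eq[OF V0] unfolding B_def by simp
  have "A * B = (1 + U * A) * (1 + V * B)" using eA eB by simp
  also have "\<dots> = 1 + U * A + V * B + U * A * V * B" by (simp add: algebra_simps)
  finally have AB: "A * B = 1 + U * A + V * B + U * A * V * B" .
  have "1 + (U + V) * (A * B) = 1 + U * A * (1 + V * B) + V * B * (1 + U * A)"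
    using eA eB by (simp add: algebra_simps)
  also have "\<dots> = 1 + U * A + V * B + (U * A * V * B + U * A * V * B)"
    by (simp add: algebra_simps)
  also have "\<dots> = A * B" using AB by (simp add: fps_idem)
  finally show "A * B = 1 + (U + V) * (A * B)" unfolding A_def B_def by simp
qed

lemma star_idem:
  fixes U :: "'a fps"
  assumes "U $ 0 = 0"
  shows "fps_star U * fps_star U = fps_star U"
  using star_add[OF assms assms] by (simp add: fps_idem)

lemma star_mult_star:
  fixes P W :: "'a fps"
  assumes P0: "P $ 0 = 0" and W0: "W $ 0 = 0"
  shows "fps_star (P * fps_star W) = 1 + P * fps_star P * fps_star W"
proof (rule star_unique[symmetric])
  show "(P * fps_star W) $ 0 = 0" using P0 by simp
  define T where "T = fps_star P"
  define S where "S = fps_star W"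
  have eT: "1 + P * T = T" using star_eq[OF P0] unfolding T_def by simp
  have SS: "S * S = S" using star_idem[OF W0] unfolding S_def by simp
  have "1 + P * S * (1 + P * T * S) = 1 + P * S + P * P * T * (S * S)"
    by (simp add: algebra_simps)
  also have "\<dots> = 1 + P * S * (1 + P * T)" using SS by (simp add: algebra_simps)
  also have "\<dots> = 1 + P * T * S" using eT by (simp add: algebra_simps)
  finally show "1 + P * T * S = 1 + P * S * (1 + P * T * S)" by simp
qed


lemma trm_mult:
  assumes c: "0 < c"
  shows "trm c p (q::'a) * trm c p' q' = trm c (p * p') (q + q')"
proof -
  have "fps_star (fps_const q * fps_X ^ c) * fps_star (fps_const q' * fps_X ^ c)
        = fps_star (fps_const q * fps_X ^ c + fps_const q' * fps_X ^ c)"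
    by (rule star_add) (use c in simp_all)
  also have "fps_const q * fps_X ^ c + fps_const q' * fps_X ^ c = fps_const (q + q') * fps_X ^ c"
    by (metis distrib_right fps_const_add)
  finally show ?thesis unfolding trm_def by (simp add: fps_of_poly_mult algebra_simps)
qed

lemma good_mult_trm:
  assumes c: "0 < c" and T: "good c (T::'a fps)"
  shows "good c (trm c p q * T)"
proof -
  obtain ys where ys: "T = sum_list (map (\<lambda>(p,q). trm c p q) ys)"
    using T unfolding good_def by blast
  have "good c (trm c p q * sum_list (map (\<lambda>(p,q). trm c p q) ys))"
  proof (induction ys)
    case Nil then show ?case by (simp add: good_0)
  next
    case (Cons a ys)
    obtain p' q' where a: "a = (p', q')" by (cases a)
    show ?case using Cons a by (simp add: distrib_left trm_mult[OF c] good_add good_trm)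
  qed
  then show ?thesis using ys by simp
qed

lemma good_mult:
  assumes c: "0 < c" and S: "good c (S::'a fps)" and T: "good c T"
  shows "good c (S * T)"
proof -
  obtain xs where xs: "S = sum_list (map (\<lambda>(p,q). trm c p q) xs)"
    using S unfolding good_def by blast
  have "good c (sum_list (map (\<lambda>(p,q). trm c p q) xs) * T)"
  proof (induction xs)
    case Nil then show ?case by (simp add: good_0)
  next
    case (Cons a xs)
    obtain p q where a: "a = (p, q)" by (cases a)
    show ?case using Cons a by (simp add: distrib_right good_add good_mult_trm[OF c T])
  qed
  then show ?thesis using xs by simp
qed

lemma goodA_mult: "goodA (S::'a fps) \<Longrightarrow> goodA T \<Longrightarrow> goodA (S * T)"
  unfolding goodA_def
  by (metis good_mult good_lift mult.commute nat_0_less_mult_iff)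

lemma goodA_prod:
  fixes f :: "'b \<Rightarrow> 'a fps"
  shows "finite A \<Longrightarrow> (\<And>i. i \<in> A \<Longrightarrow> goodA (f i)) \<Longrightarrow> goodA (prod f A)"
  by (induction A rule: finite_induct) (auto simp: goodA_1 goodA_mult)

lemma star_sum:
  fixes f :: "'b \<Rightarrow> 'a fps"
  shows "finite A \<Longrightarrow> (\<And>i. i \<in> A \<Longrightarrow> f i $ 0 = 0) \<Longrightarrow>
    fps_star (sum f A) = (\<Prod>i\<in>A. fps_star (f i))"
proof (induction A rule: finite_induct)
  case empty then show ?case by simp
next
  case (insert x F)
  have "sum f F $ 0 = 0" using insert by (simp add: fps_sum_nth)
  then show ?case using insert star_add[of "f x" "sum f F"] by simp
qed

lemma fps_of_poly_as_sum:
  "fps_of_poly p = (\<Sum>m\<le>degree p. fps_const (coeff p m) * fps_X ^ m)"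
proof (rule fps_ext)
  fix n
  show "fps_of_poly p $ n = (\<Sum>m\<le>degree p. fps_const (coeff p m) * fps_X ^ m) $ n"
  proof (cases "n \<le> degree p")
    case True then show ?thesis by (simp add: fps_sum_nth if_distrib cong: if_cong)
  next
    case False then show ?thesis by (simp add: fps_sum_nth coeff_eq_0)
  qed
qed

lemma goodA_star_poly:
  assumes p0: "coeff (p::'a poly) 0 = 0"
  shows "goodA (fps_star (fps_of_poly p))"
proof -
  have "fps_star (fps_of_poly p) = (\<Prod>m\<le>degree p. fps_star (fps_const (coeff p m) * fps_X ^ m))"
    unfolding fps_of_poly_as_sum by (rule star_sum) (use p0 in auto)
  also have "goodA \<dots>"
  proof (rule goodA_prod)
    fix m assume "m \<in> {..degree p}"
    show "goodA (fps_star (fps_const (coeff p m) * fps_X ^ m))"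
    proof (cases "m = 0")
      case True then show ?thesis using p0 by (simp add: goodA_1)
    next
      case False then show ?thesis by (simp add: goodA_starZ)
    qed
  qed simp
  finally show ?thesis .
qed

lemma goodA_star_list:
  assumes c: "0 < c"
  shows "sum_list (map (\<lambda>(p,q). trm c p (q::'a)) xs) $ 0 = 0 \<Longrightarrow>
    goodA (fps_star (sum_list (map (\<lambda>(p,q). trm c p q) xs)))"
proof (induction xs)
  case Nil then show ?case by (simp add: goodA_1)
next
  case (Cons a xs)
  obtain p q where a: "a = (p, q)" by (cases a)
  define R where "R = sum_list (map (\<lambda>(p,q). trm c p q) xs)"
  have s0: "coeff p 0 + R $ 0 = 0" using Cons.prems a by (simp add: R_def trm0[OF c])
  then have p0: "coeff p 0 = 0" by (rule zsf)
  have R0: "R $ 0 = 0" using s0 zsf[of "R $ 0" "coeff p 0"] by (simp add: add.commute)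
  have t0: "trm c p q $ 0 = 0" using p0 by (simp add: trm_def)
  have "fps_star (trm c p q + R) = fps_star (trm c p q) * fps_star R"
    using star_add[OF t0 R0] by simp
  also have "fps_star (trm c p q) =
     1 + fps_of_poly p * fps_star (fps_of_poly p) * fps_star (fps_const q * fps_X ^ c)"
    unfolding trm_def by (rule star_mult_star) (use p0 c in simp_all)
  finally have eq: "fps_star (trm c p q + R) = \<dots> * fps_star R" .
  have "goodA (fps_star R)" using Cons.IH R0 by (simp add: R_def)
  then have "goodA ((1 + fps_of_poly p * fps_star (fps_of_poly p) * fps_star (fps_const q * fps_X ^ c)) * fps_star R)"
    by (intro goodA_mult goodA_add goodA_1 goodA_poly goodA_star_poly goodA_starZ p0 c)
  then show ?case using eq a by (simp add: R_def)
qed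

lemma goodA_star: "goodA (U::'a fps) \<Longrightarrow> U $ 0 = 0 \<Longrightarrow> goodA (fps_star U)"
  unfolding goodA_def[of U] good_def using goodA_star_list by blast

lemma rational_goodA: "(S::'a fps) \<in> rational_fps \<Longrightarrow> goodA S"
  by (induction rule: rational_fps.induct)
     (auto simp: goodA_poly goodA_add goodA_mult goodA_star)

end


theorem lemma1:
  fixes S :: "'a::comm_semiring_1 fps"
  assumes idem: "\<And>u::'a. u + u = u"
    and rat: "S \<in> rational_fps"
  shows "\<exists>(r::nat) (P :: nat \<Rightarrow> 'a poly) (q :: nat \<Rightarrow> 'a) (c::nat). c > 0 \<and>
           S = (\<Sum>i\<in>{1..r}. fps_of_poly (P i) * fps_star (fps_const (q i) * fps_X ^ c))"
proof -
  have "goodA S" by (rule rational_goodA[OF idem rat])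
  then obtain c xs where c: "0 < c" and xs: "S = sum_list (map (\<lambda>(p,q). trm c p q) xs)"
    unfolding goodA_def good_def by blast
  define P where "P i = fst (xs ! (i - 1))" for i
  define q where "q i = snd (xs ! (i - 1))" for i
  have "sum_list (map (\<lambda>(p,q). trm c p q) xs) = (\<Sum>i = 0..<length xs. (\<lambda>(p,q). trm c p q) (xs ! i))"
    by (simp add: sum_list_sum_nth)
  also have "\<dots> = (\<Sum>i\<in>{1..length xs}. trm c (P i) (q i))"
    by (simp add: sum.atLeast1_atMost_eq P_def q_def atLeast0LessThan case_prod_beta)
  finally have "S = (\<Sum>i\<in>{1..length xs}. fps_of_poly (P i) * fps_star (fps_const (q i) * fps_X ^ c))"
    using xs by (simp add: trm_def)
  then show ?thesis using c by blast
qed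

end
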